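(* Let $\{D_1,D_2,D_3\}$ be a positively oriented orthonormal basis of $\mathbb{R}^3$ and let $J$ be a symmetric positive definite linear map $\mathbb{R}^3\to\mathbb{R}^3$ having $D_3$ as an eigenvector. Let $\Lambda:[0,T]\to SO(3)$ be a smooth curve and $\mu:[0,T]\to\mathbb{R}$ a function such that, for all $t\in[0,T]$, $$\nabla_{\dot d_3}\pi_\perp+\pi_\parallel\,\dot d_3=0,\qquad \dot\pi_\parallel+\pi_\perp\cdot\dot d_3+\mu=0,\qquad w\cdot d_3=0 .$$ Then the kinetic energy $K=\tfrac12 W\cdot JW=\tfrac12 w\cdot jw$ and the quantities $$\Pi^1=D_1\cdot\Pi=d_1\cdot\pi,\qquad \Pi^2=D_2\cdot\Pi=d_2\cdot\pi$$ are constant on $[0,T]$.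
   Context: Notation: $d_i(t)=\Lambda(t)D_i$ for $i=1,2,3$. For $v\in\mathbb{R}^3$, $\hat v$ denotes the skew-symmetric matrix with $\hat v a=v\times a$. The spatial angular velocity $w$ and convected angular velocity $W$ are defined by $\dot\Lambda=\hat w\Lambda=\Lambda\hat W$ (so $W=\Lambda^Tw$). The spatial inertia is $j=\Lambda J\Lambda^T$; the spatial angular momentum is $\pi=jw$ and the convected one is $\Pi=\Lambda^T\pi=JW$. Split $\pi=\pi_\perp+\pi_\parallel d_3$ with $\pi_\parallel=\pi\cdot d_3$ and $\pi_\perp=(I-d_3\otimes d_3)\pi$. For a curve $v(t)$ with $v(t)\cdot d_3(t)=0$, the covariant derivative on the unit sphere along $d_3$ is $\nabla_{\dot d_3}v:=(I-d_3\otimes d_3)\dot v$. The condition $w\cdot d_3=0$ is the non-twisting (nonholonomic) constraint and $\mu$ is the associated Lagrange multiplier; no external moments act. *)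

theory Defs
  imports "HOL-Analysis.Analysis"
begin

definition hat :: "real^3 \<Rightarrow> real^3^3" where
  "hat v = matrix (\<lambda>a. cross3 v a)"

definition SO3 :: "(real^3^3) set" where
  "SO3 = {Q. orthogonal_matrix Q \<and> det Q = 1}"

definition smooth_on_interval :: "real \<Rightarrow> (real \<Rightarrow> 'a::real_normed_vector) \<Rightarrow> bool" where
  "smooth_on_interval T f \<longleftrightarrow>
     (\<exists>D :: nat \<Rightarrow> real \<Rightarrow> 'a. D 0 = f \<and>
        (\<forall>k. \<forall>t\<in>{0..T}. (D k has_vector_derivative D (Suc k) t) (at t within {0..T})))"

definition dt :: "real \<Rightarrow> (real \<Rightarrow> 'a::real_normed_vector) \<Rightarrow> real \<Rightarrow> 'a" where
  "dt T f t = vector_derivative f (at t within {0..T})"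

definition perp_proj :: "real^3 \<Rightarrow> real^3 \<Rightarrow> real^3" where
  "perp_proj d v = v - (v \<bullet> d) *\<^sub>R d"

end

theory Submission
  imports Defs
begin

lemma hat_apply: "hat v *v a = cross3 v a"
  unfolding hat_def using bilinear_cross by (simp add: matrix_works bilinear_def)

lemma inner_mv: "x \<bullet> (A *v y) = (transpose A *v x) \<bullet> (y::real^'n)"
  by (metis dot_lmul_matrix transpose_matrix_vector)

lemma hatT_self: "transpose (hat v) *v v = 0"
proof -
  have "(transpose (hat v) *v v) \<bullet> y = 0" for y
    by (metis inner_mv inner_commute hat_apply dot_cross_self(1) transpose_transpose)
  then show ?thesis by (metis inner_eq_zero_iff)
qed

definition ax :: "real^3^3 \<Rightarrow> real^3" where
  "ax M = (\<chi> i. if i = 1 then M$3$2 else if i = 2 then M$1$3 else M$2$1)"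

lemma ax_hat: "ax (hat v) = v"
  unfolding ax_def hat_def
  apply (simp add: vec_eq_iff matrix_def cross3_def axis_def forall_3 vector_def)
  done

lemma bl_ax: "bounded_linear ax"
  unfolding linear_conv_bounded_linear[symmetric]
  by (rule linearI) (simp_all add: ax_def vec_eq_iff)

lemma bb_mm: "bounded_bilinear ((\<lambda>A B. A ** B) :: real^3^3 \<Rightarrow> real^3^3 \<Rightarrow> real^3^3)"
  unfolding bilinear_conv_bounded_bilinear[symmetric] bilinear_def
  by (auto intro!: linearI simp: vec_eq_iff matrix_matrix_mult_def sum.distrib algebra_simps sum_distrib_left)

lemma bb_mv: "bounded_bilinear ((\<lambda>A x. A *v x) :: real^3^3 \<Rightarrow> real^3 \<Rightarrow> real^3)"
  unfolding bilinear_conv_bounded_bilinear[symmetric] bilinear_def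
  by (auto intro!: linearI simp: vec_eq_iff matrix_vector_mult_def sum.distrib algebra_simps sum_distrib_left)

lemma bl_tr: "bounded_linear (transpose :: real^3^3 \<Rightarrow> real^3^3)"
  unfolding linear_conv_bounded_linear[symmetric]
  by (rule linearI) (simp_all add: transpose_def vec_eq_iff)

lemma triple0:
  fixes a b c d :: "real^3"
  assumes "a \<bullet> d = 0" "b \<bullet> d = 0" "c \<bullet> d = 0" "d \<noteq> 0"
  shows "cross3 a b \<bullet> c = 0"
proof -
  have e: "a$1*d$1+a$2*d$2+a$3*d$3 = 0" "b$1*d$1+b$2*d$2+b$3*d$3 = 0" "c$1*d$1+c$2*d$2+c$3*d$3 = 0"
    using assms by (simp_all add: inner_vec_def sum_3)
  have x1: "(cross3 a b \<bullet> c) * d$1 = 0" using e unfolding cross3_def inner_vec_def sum_3 vector_3 inner_real_def by algebra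
  have x2: "(cross3 a b \<bullet> c) * d$2 = 0" using e unfolding cross3_def inner_vec_def sum_3 vector_3 inner_real_def by algebra
  have x3: "(cross3 a b \<bullet> c) * d$3 = 0" using e unfolding cross3_def inner_vec_def sum_3 vector_3 inner_real_def by algebra
  have x: "(cross3 a b \<bullet> c) * d$i = 0" for i
    using x1 x2 x3 exhaust_3[of i] by auto
  obtain i where "d$i \<noteq> 0" using assms(4) by (metis vec_eq_iff zero_index)
  with x[of i] show ?thesis by simp
qed

lemma orth_inner: "transpose L ** L = mat 1 \<Longrightarrow> (L *v a) \<bullet> (L *v b) = a \<bullet> (b::real^3)"
  by (metis inner_mv matrix_vector_mul_assoc matrix_vector_mul_lid)

lemma hat_eq: "hat v ** L = L1 \<Longrightarrow> L ** transpose L = mat 1 \<Longrightarrow> hat v = L1 ** transpose L"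
  by (metis matrix_mul_assoc matrix_mul_rid)

lemma L1T_w: "L1 = hat v ** L \<Longrightarrow> transpose L1 *v v = 0"
  by (metis hatT_self matrix_transpose_mul matrix_vector_mul_assoc matrix_vector_mult_0_right)

lemma L1_apply: "L1 = hat v ** L \<Longrightarrow> L1 *v a = cross3 v (L *v a)"
  by (metis hat_apply matrix_vector_mul_assoc)

theorem theorem6:
  fixes D1 D2 D3 :: "real^3" and J :: "real^3^3" and T :: real
    and \<Lambda> :: "real \<Rightarrow> real^3^3" and w :: "real \<Rightarrow> real^3" and \<mu> :: "real \<Rightarrow> real"
    and d1 d2 d3 :: "real \<Rightarrow> real^3" and j :: "real \<Rightarrow> real^3^3"
    and W \<pi> Pic \<pi>_perp :: "real \<Rightarrow> real^3" and \<pi>_par K Pi1 Pi2 :: "real \<Rightarrow> real"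
  assumes orthonormal: "norm D1 = 1" "norm D2 = 1" "norm D3 = 1"
      "D1 \<bullet> D2 = 0" "D1 \<bullet> D3 = 0" "D2 \<bullet> D3 = 0"
    and pos_oriented: "det (vector [D1, D2, D3] :: real^3^3) > 0"
    and J_sym: "transpose J = J"
    and J_posdef: "\<forall>x. x \<noteq> 0 \<longrightarrow> x \<bullet> (J *v x) > 0"
    and J_eig: "\<exists>c. J *v D3 = c *\<^sub>R D3"
    and \<Lambda>_SO3: "\<forall>t\<in>{0..T}. \<Lambda> t \<in> SO3"
    and \<Lambda>_smooth: "smooth_on_interval T \<Lambda>"
    and w_def: "\<forall>t\<in>{0..T}. (\<Lambda> has_vector_derivative (hat (w t) ** \<Lambda> t)) (at t within {0..T})"
    and d1_def: "\<And>t. d1 t = \<Lambda> t *v D1"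
    and d2_def: "\<And>t. d2 t = \<Lambda> t *v D2"
    and d3_def: "\<And>t. d3 t = \<Lambda> t *v D3"
    and W_def: "\<And>t. W t = transpose (\<Lambda> t) *v w t"
    and j_def: "\<And>t. j t = \<Lambda> t ** J ** transpose (\<Lambda> t)"
    and \<pi>_def: "\<And>t. \<pi> t = j t *v w t"
    and Pic_def: "\<And>t. Pic t = transpose (\<Lambda> t) *v \<pi> t"
    and \<pi>_par_def: "\<And>t. \<pi>_par t = \<pi> t \<bullet> d3 t"
    and \<pi>_perp_def: "\<And>t. \<pi>_perp t = perp_proj (d3 t) (\<pi> t)"
    and K_def: "\<And>t. K t = (1/2) * (W t \<bullet> (J *v W t))"
    and Pi1_def: "\<And>t. Pi1 t = D1 \<bullet> Pic t"
    and Pi2_def: "\<And>t. Pi2 t = D2 \<bullet> Pic t"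
    and eq1: "\<forall>t\<in>{0..T}. perp_proj (d3 t) (dt T \<pi>_perp t) + \<pi>_par t *\<^sub>R dt T d3 t = 0"
    and eq2: "\<forall>t\<in>{0..T}. dt T \<pi>_par t + \<pi>_perp t \<bullet> dt T d3 t + \<mu> t = 0"
    and eq3: "\<forall>t\<in>{0..T}. w t \<bullet> d3 t = 0"
  shows "\<forall>s\<in>{0..T}. \<forall>t\<in>{0..T}.
           K s = K t \<and> (1/2) * (w s \<bullet> (j s *v w s)) = (1/2) * (w t \<bullet> (j t *v w t))
           \<and> Pi1 s = Pi1 t \<and> d1 s \<bullet> \<pi> s = d1 t \<bullet> \<pi> t
           \<and> Pi2 s = Pi2 t \<and> d2 s \<bullet> \<pi> s = d2 t \<bullet> \<pi> t"
  proof (intro ballI)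
  fix s t assume s: "s \<in> {0..T}" and t: "t \<in> {0..T}"
  define S where "S = {0..T}"
  have piE: "\<pi> x = \<Lambda> x *v (J *v (transpose (\<Lambda> x) *v w x))" for x
    by (simp only: \<pi>_def j_def matrix_vector_mul_assoc matrix_mul_assoc)
  have Kx: "K x = (1/2) * (w x \<bullet> \<pi> x)" for x
    by (simp only: K_def W_def piE inner_mv)
  have Kj: "(1/2) * (w x \<bullet> (j x *v w x)) = (1/2) * (w x \<bullet> \<pi> x)" for x
    by (simp only: \<pi>_def)
  have P1: "Pi1 x = d1 x \<bullet> \<pi> x" for x
    by (metis Pi1_def Pic_def d1_def inner_mv transpose_transpose inner_commute)
  have P2: "Pi2 x = d2 x \<bullet> \<pi> x" for x
    by (metis Pi2_def Pic_def d2_def inner_mv transpose_transpose inner_commute)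
  have main: "f s = f t"
    if hf: "\<And>x. x \<in> S \<Longrightarrow> (f has_vector_derivative 0) (at x within S)" for f :: "real \<Rightarrow> real"
  proof -
    have "convex S" by (simp add: S_def)
    then obtain c where "\<And>x. x \<in> S \<Longrightarrow> f x = c"
      using has_vector_derivative_zero_constant[of S f] hf by blast
    then show ?thesis using s t S_def by auto
  qed
  show "K s = K t \<and> (1/2) * (w s \<bullet> (j s *v w s)) = (1/2) * (w t \<bullet> (j t *v w t))
           \<and> Pi1 s = Pi1 t \<and> d1 s \<bullet> \<pi> s = d1 t \<bullet> \<pi> t
           \<and> Pi2 s = Pi2 t \<and> d2 s \<bullet> \<pi> s = d2 t \<bullet> \<pi> t"
  proof (cases "T = 0")
    case True
    then show ?thesis using s t by auto
  next
    case False
    then have T: "0 < T" using s by auto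
    obtain Dk :: "nat \<Rightarrow> real \<Rightarrow> real^3^3" where Dk0: "Dk 0 = \<Lambda>"
      and Dk: "\<And>k x. x \<in> S \<Longrightarrow> (Dk k has_vector_derivative Dk (Suc k) x) (at x within S)"
      using \<Lambda>_smooth unfolding smooth_on_interval_def S_def by blast
    define L1 where "L1 = Dk 1"
    define L2 where "L2 = Dk 2"
    define w' where "w' = (\<lambda>y. ax (L1 y ** transpose (L1 y) + L2 y ** transpose (\<Lambda> y)))"
    define \<pi>' where "\<pi>' = (\<lambda>y. \<Lambda> y *v (J *v (transpose (\<Lambda> y) *v w' y)) + cross3 (w y) (\<pi> y))"
    have dL: "(\<Lambda> has_vector_derivative L1 x) (at x within S)" if "x \<in> S" for x
      using Dk[OF that, of 0] by (simp add: Dk0 L1_def)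
    have dL1: "(L1 has_vector_derivative L2 x) (at x within S)" if "x \<in> S" for x
      using Dk[OF that, of 1] by (simp add: L1_def L2_def numeral_2_eq_2)
    have orth: "transpose (\<Lambda> x) ** \<Lambda> x = mat 1" "\<Lambda> x ** transpose (\<Lambda> x) = mat 1" if "x \<in> S" for x
      using \<Lambda>_SO3 that unfolding S_def SO3_def orthogonal_matrix_def by auto
    have hw: "L1 x = hat (w x) ** \<Lambda> x" if "x \<in> S" for x
    proof -
      have "(\<Lambda> has_vector_derivative hat (w x) ** \<Lambda> x) (at x within cbox 0 T)"
        using w_def that by (simp add: S_def)
      moreover have "(\<Lambda> has_vector_derivative L1 x) (at x within cbox 0 T)"
        using dL[OF that] by (simp add: S_def)
      ultimately show ?thesis
        using vector_derivative_unique_within_closed_interval[OF T] that by (auto simp: S_def)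
    qed
    have wax: "w x = ax (L1 x ** transpose (\<Lambda> x))" if "x \<in> S" for x
      using hat_eq[OF hw[OF that, symmetric] orth(2)[OF that]] ax_hat by metis
    have dw: "(w has_vector_derivative w' x) (at x within S)" if "x \<in> S" for x
    proof -
      have h: "((\<lambda>y. ax (L1 y ** transpose (\<Lambda> y))) has_vector_derivative w' x) (at x within S)"
        using bounded_linear.has_vector_derivative[OF bl_ax,
          OF bounded_bilinear.has_vector_derivative[OF bb_mm dL1[OF that]
             bounded_linear.has_vector_derivative[OF bl_tr dL[OF that]]]]
        by (simp add: w'_def)
      show ?thesis
        by (rule has_vector_derivative_transform[OF that _ h]) (simp add: wax)
    qed
    have dWf: "((\<lambda>y. transpose (\<Lambda> y) *v w y) has_vector_derivative transpose (\<Lambda> x) *v w' x) (at x within S)"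
      if "x \<in> S" for x
    proof -
      have "((\<lambda>y. transpose (\<Lambda> y) *v w y) has_vector_derivative
          transpose (\<Lambda> x) *v w' x + transpose (L1 x) *v w x) (at x within S)"
        using bounded_bilinear.has_vector_derivative[OF bb_mv
             bounded_linear.has_vector_derivative[OF bl_tr dL[OF that]] dw[OF that]]
        by simp
      moreover have "transpose (L1 x) *v w x = 0" using L1T_w[OF hw[OF that]] .
      ultimately show ?thesis by simp
    qed
    have d\<pi>0: "(\<pi> has_vector_derivative \<pi>' x) (at x within S)" if "x \<in> S" for x
    proof -
      have dJ: "((\<lambda>y. J *v (transpose (\<Lambda> y) *v w y)) has_vector_derivative
           J *v (transpose (\<Lambda> x) *v w' x)) (at x within S)"
        using bounded_bilinear.has_vector_derivative[OF bb_mv has_vector_derivative_const dWf[OF that]]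
        by simp
      have "((\<lambda>y. \<Lambda> y *v (J *v (transpose (\<Lambda> y) *v w y))) has_vector_derivative
           \<Lambda> x *v (J *v (transpose (\<Lambda> x) *v w' x)) + L1 x *v (J *v (transpose (\<Lambda> x) *v w x))) (at x within S)"
        using bounded_bilinear.has_vector_derivative[OF bb_mv dL[OF that] dJ] by simp
      moreover have "L1 x *v (J *v (transpose (\<Lambda> x) *v w x)) = cross3 (w x) (\<pi> x)"
        using L1_apply[OF hw[OF that]] piE by metis
      ultimately show ?thesis unfolding \<pi>'_def piE[abs_def] by simp
    qed
    obtain c where c: "J *v D3 = c *\<^sub>R D3" using J_eig by blast
    have par0: "\<pi> x \<bullet> d3 x = 0" if "x \<in> S" for x
    proof -
      have "\<pi> x \<bullet> d3 x = (J *v (transpose (\<Lambda> x) *v w x)) \<bullet> D3"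
        using orth_inner[OF orth(1)[OF that]] by (simp only: piE d3_def)
      also have "\<dots> = (transpose (\<Lambda> x) *v w x) \<bullet> (J *v D3)"
        by (metis inner_mv J_sym inner_commute)
      also have "\<dots> = c * ((transpose (\<Lambda> x) *v w x) \<bullet> D3)" by (simp add: c)
      also have "(transpose (\<Lambda> x) *v w x) \<bullet> D3 = w x \<bullet> d3 x"
        by (metis inner_mv inner_commute d3_def)
      also have "w x \<bullet> d3 x = 0" using eq3 that S_def by auto
      finally show ?thesis by simp
    qed
    have d\<pi>: "(\<pi>_perp has_vector_derivative \<pi>' x) (at x within S)" if "x \<in> S" for x
      by (rule has_vector_derivative_transform[OF that _ d\<pi>0[OF that]])
         (simp add: \<pi>_perp_def perp_proj_def par0)
    have dt\<pi>: "dt T \<pi>_perp x = \<pi>' x" if "x \<in> S" for x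
      unfolding dt_def using vector_derivative_within_closed_interval[OF T] d\<pi>[OF that] that
      by (simp add: S_def)
    have \<pi>'d: "\<pi>' x = (\<pi>' x \<bullet> d3 x) *\<^sub>R d3 x" if "x \<in> S" for x
    proof -
      have "perp_proj (d3 x) (dt T \<pi>_perp x) + \<pi>_par x *\<^sub>R dt T d3 x = 0"
        using eq1 that by (auto simp: S_def)
      then have "perp_proj (d3 x) (\<pi>' x) = 0"
        using dt\<pi>[OF that] par0[OF that] by (simp add: \<pi>_par_def)
      then show ?thesis by (simp add: perp_proj_def)
    qed
    have dd: "d1 x \<bullet> d3 x = 0" "d2 x \<bullet> d3 x = 0" "d3 x \<bullet> d3 x = 1" if "x \<in> S" for x
      using orth_inner[OF orth(1)[OF that]] orthonormal
      by (simp_all add: d1_def d2_def d3_def norm_eq_1)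
    have w3: "w x \<bullet> d3 x = 0" if "x \<in> S" for x using eq3 that S_def by auto
    have wpi': "w x \<bullet> \<pi>' x = 0" "d1 x \<bullet> \<pi>' x = 0" "d2 x \<bullet> \<pi>' x = 0" if "x \<in> S" for x
      using \<pi>'d[OF that] dd[OF that] w3[OF that]
      by (metis inner_scaleR_right mult_zero_right)+
    have d3nz: "d3 x \<noteq> 0" if "x \<in> S" for x using dd(3)[OF that] by auto
    have sym: "w' x \<bullet> \<pi> x = w x \<bullet> \<pi>' x" if "x \<in> S" for x
    proof -
      have "w x \<bullet> cross3 (w x) (\<pi> x) = 0" by (simp add: dot_cross_self)
      moreover have "w x \<bullet> (\<Lambda> x *v (J *v (transpose (\<Lambda> x) *v w' x)))
          = w' x \<bullet> (\<Lambda> x *v (J *v (transpose (\<Lambda> x) *v w x)))"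
        by (metis inner_mv J_sym inner_commute)
      ultimately show ?thesis by (simp add: \<pi>'_def inner_add_right piE)
    qed
    have c1: "(\<lambda>x. w x \<bullet> \<pi> x) s = (\<lambda>x. w x \<bullet> \<pi> x) t"
    proof (rule main)
      fix x assume x: "x \<in> S"
      have "((\<lambda>x. w x \<bullet> \<pi> x) has_vector_derivative w x \<bullet> \<pi>' x + w' x \<bullet> \<pi> x) (at x within S)"
        using bounded_bilinear.has_vector_derivative[OF bounded_bilinear_inner dw[OF x] d\<pi>0[OF x]] .
      then show "((\<lambda>x. w x \<bullet> \<pi> x) has_vector_derivative 0) (at x within S)"
        using sym[OF x] wpi'[OF x] by simp
    qed
    have dd1: "(d1 has_vector_derivative cross3 (w x) (d1 x)) (at x within S)"
      "(d2 has_vector_derivative cross3 (w x) (d2 x)) (at x within S)" if "x \<in> S" for x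
    proof -
      have "((\<lambda>y. \<Lambda> y *v D1) has_vector_derivative \<Lambda> x *v 0 + L1 x *v D1) (at x within S)"
        using bounded_bilinear.has_vector_derivative[OF bb_mv dL[OF that] has_vector_derivative_const] by simp
      then show "(d1 has_vector_derivative cross3 (w x) (d1 x)) (at x within S)"
        using L1_apply[OF hw[OF that]] d1_def by (simp add: d1_def[abs_def])
      have "((\<lambda>y. \<Lambda> y *v D2) has_vector_derivative \<Lambda> x *v 0 + L1 x *v D2) (at x within S)"
        using bounded_bilinear.has_vector_derivative[OF bb_mv dL[OF that] has_vector_derivative_const] by simp
      then show "(d2 has_vector_derivative cross3 (w x) (d2 x)) (at x within S)"
        using L1_apply[OF hw[OF that]] d2_def by (simp add: d2_def[abs_def])
    qed
    have c2: "(\<lambda>x. d1 x \<bullet> \<pi> x) s = (\<lambda>x. d1 x \<bullet> \<pi> x) t"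
    proof (rule main)
      fix x assume x: "x \<in> S"
      have "((\<lambda>x. d1 x \<bullet> \<pi> x) has_vector_derivative d1 x \<bullet> \<pi>' x + cross3 (w x) (d1 x) \<bullet> \<pi> x) (at x within S)"
        using bounded_bilinear.has_vector_derivative[OF bounded_bilinear_inner dd1(1)[OF x] d\<pi>0[OF x]] .
      moreover have "cross3 (w x) (d1 x) \<bullet> \<pi> x = 0"
        using triple0[OF w3[OF x] dd(1)[OF x] par0[OF x] d3nz[OF x]] .
      ultimately show "((\<lambda>x. d1 x \<bullet> \<pi> x) has_vector_derivative 0) (at x within S)"
        using wpi'[OF x] by simp
    qed
    have c3: "(\<lambda>x. d2 x \<bullet> \<pi> x) s = (\<lambda>x. d2 x \<bullet> \<pi> x) t"
    proof (rule main)
      fix x assume x: "x \<in> S"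
      have "((\<lambda>x. d2 x \<bullet> \<pi> x) has_vector_derivative d2 x \<bullet> \<pi>' x + cross3 (w x) (d2 x) \<bullet> \<pi> x) (at x within S)"
        using bounded_bilinear.has_vector_derivative[OF bounded_bilinear_inner dd1(2)[OF x] d\<pi>0[OF x]] .
      moreover have "cross3 (w x) (d2 x) \<bullet> \<pi> x = 0"
        using triple0[OF w3[OF x] dd(2)[OF x] par0[OF x] d3nz[OF x]] .
      ultimately show "((\<lambda>x. d2 x \<bullet> \<pi> x) has_vector_derivative 0) (at x within S)"
        using wpi'[OF x] by simp
    qed
    have "K s = K t" using c1 Kx[of s] Kx[of t] by simp
    then show ?thesis using c1 c2 c3 Kj P1 P2 by simp
  qed
qed

end
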